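(* Let $\kappa$ be an infinite cardinal. The set $B=\{(A,\,A\cap C,\,C): A,C\in\mathcal{F}(\kappa),\ A\sim C\}$ is a bounded Boolean sublattice of $S$.
   Context: $\mathcal{F}(\kappa)$ is the Boolean lattice of subsets $X\subseteq\kappa$ that are finite or cofinite. For $A,C\in\mathcal{F}(\kappa)$, $A\sim C$ means that either both $A,C$ are finite or both $\kappa\setminus A,\kappa\setminus C$ are finite. Let $\mu(A,B,C)=(A\cap B)\cup(A\cap C)\cup(B\cap C)$; a triple is balanced if $A\cap B=A\cap C=B\cap C$. $S$ is the set of balanced triples $(A,B,C)\in\mathcal{F}(\kappa)^3$ with $C\setminus\mu(A,B,C)$ finite, ordered componentwise; it is a bounded lattice with componentwise meet, join $(A,B,C)\vee(A',B',C')=(U_1\cup m,U_2\cup m,U_3\cup m)$ where $U_1=A\cup A'$, $U_2=B\cup B'$, $U_3=C\cup C'$, $m=\mu(U_1,U_2,U_3)$, and bounds $(\emptyset,\emptyset,\emptyset)$, $(\kappa,\kappa,\kappa)$. *)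

theory Defs
  imports Main
begin

text \<open>The infinite cardinal kappa is modelled by an infinite type 'a (its universe).
  Triples are elements of 'a set \<times> 'a set \<times> 'a set.\<close>

definition FC :: "'a set set" where
  "FC = {X. finite X \<or> finite (- X)}"

definition simeq :: "'a set \<Rightarrow> 'a set \<Rightarrow> bool" where
  "simeq A C \<longleftrightarrow> (finite A \<and> finite C) \<or> (finite (- A) \<and> finite (- C))"

definition med :: "'a set \<Rightarrow> 'a set \<Rightarrow> 'a set \<Rightarrow> 'a set" where
  "med A B C = (A \<inter> B) \<union> (A \<inter> C) \<union> (B \<inter> C)"

definition balanced :: "'a set \<Rightarrow> 'a set \<Rightarrow> 'a set \<Rightarrow> bool" where
  "balanced A B C \<longleftrightarrow> A \<inter> B = A \<inter> C \<and> A \<inter> C = B \<inter> C"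

definition Sset :: "('a set \<times> 'a set \<times> 'a set) set" where
  "Sset = {(A, B, C). A \<in> FC \<and> B \<in> FC \<and> C \<in> FC \<and> balanced A B C
                      \<and> finite (C - med A B C)}"

definition meetS :: "'a set \<times> 'a set \<times> 'a set \<Rightarrow> 'a set \<times> 'a set \<times> 'a set \<Rightarrow> 'a set \<times> 'a set \<times> 'a set" where
  "meetS x y = (case x of (A, B, C) \<Rightarrow> case y of (A', B', C') \<Rightarrow>
                  (A \<inter> A', B \<inter> B', C \<inter> C'))"

definition joinS :: "'a set \<times> 'a set \<times> 'a set \<Rightarrow> 'a set \<times> 'a set \<times> 'a set \<Rightarrow> 'a set \<times> 'a set \<times> 'a set" where
  "joinS x y = (case x of (A, B, C) \<Rightarrow> case y of (A', B', C') \<Rightarrow>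
                  (let U1 = A \<union> A'; U2 = B \<union> B'; U3 = C \<union> C'; m = med U1 U2 U3
                   in (U1 \<union> m, U2 \<union> m, U3 \<union> m)))"

definition botS :: "'a set \<times> 'a set \<times> 'a set" where
  "botS = ({}, {}, {})"

definition topS :: "'a set \<times> 'a set \<times> 'a set" where
  "topS = (UNIV, UNIV, UNIV)"

definition Bset :: "('a set \<times> 'a set \<times> 'a set) set" where
  "Bset = {(A, A \<inter> C, C) | A C. A \<in> FC \<and> C \<in> FC \<and> simeq A C}"

end

theory Submission
  imports Defs
begin

lemma joinB: "joinS (A, A \<inter> C, C) (A', A' \<inter> C', C') =
   (A \<union> A', (A \<union> A') \<inter> (C \<union> C'), C \<union> C')"
  unfolding joinS_def med_def Let_def by auto

lemma meetB: "meetS (A, A \<inter> C, C) (A', A' \<inter> C', C') =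
   (A \<inter> A', (A \<inter> A') \<inter> (C \<inter> C'), C \<inter> C')"
  unfolding meetS_def by auto

lemma memB: "(x \<in> Bset) = (\<exists>A C. x = (A, A \<inter> C, C) \<and> A \<in> FC \<and> C \<in> FC \<and> simeq A C)"
  unfolding Bset_def by auto

lemma FC_int: "A \<in> FC \<Longrightarrow> B \<in> FC \<Longrightarrow> A \<inter> B \<in> FC"
  unfolding FC_def by (auto simp: Compl_Int)
lemma FC_un: "A \<in> FC \<Longrightarrow> B \<in> FC \<Longrightarrow> A \<union> B \<in> FC"
  unfolding FC_def by (auto simp: Compl_Int)
lemma FC_neg: "A \<in> FC \<Longrightarrow> - A \<in> FC"
  unfolding FC_def by auto

lemma sim_int: "simeq A C \<Longrightarrow> simeq A' C' \<Longrightarrow> simeq (A \<inter> A') (C \<inter> C')"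
  unfolding simeq_def by (auto simp: Compl_Int)
lemma sim_un: "simeq A C \<Longrightarrow> simeq A' C' \<Longrightarrow> simeq (A \<union> A') (C \<union> C')"
  unfolding simeq_def by (auto simp: Compl_Int)
lemma sim_neg: "simeq A C \<Longrightarrow> simeq (- A) (- C)"
  unfolding simeq_def by auto

lemma BsubS: "Bset \<subseteq> Sset"
proof
  fix x assume "x \<in> Bset"
  then obtain A C where x: "x = (A, A \<inter> C, C)" "A \<in> FC" "C \<in> FC" "simeq A C"
    by (auto simp: memB)
  have m: "med A (A \<inter> C) C = A \<inter> C" unfolding med_def by auto
  have "finite (C - A)"
    using x(4) unfolding simeq_def
    by (metis Diff_eq finite_Int inf_commute)
  moreover have "C - med A (A \<inter> C) C = C - A" unfolding m by auto
  ultimately show "x \<in> Sset" using x FC_int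
    unfolding Sset_def balanced_def by auto
qed

theorem lemma5p3:
  fixes Bk :: "('k set \<times> 'k set \<times> 'k set) set"
  assumes "infinite (UNIV :: 'k set)"
    and "Bk = Bset"
  shows "Bk \<subseteq> Sset
    \<and> botS \<in> Bk \<and> topS \<in> Bk
    \<and> (\<forall>x\<in>Bk. \<forall>y\<in>Bk. meetS x y \<in> Bk \<and> joinS x y \<in> Bk)
    \<and> (\<forall>x\<in>Bk. \<forall>y\<in>Bk. \<forall>z\<in>Bk.
          meetS x (joinS y z) = joinS (meetS x y) (meetS x z))
    \<and> (\<forall>x\<in>Bk. \<exists>y\<in>Bk. meetS x y = botS \<and> joinS x y = topS)"
proof (intro conjI ballI)
  show "Bk \<subseteq> Sset" using assms BsubS by simp
  show "botS \<in> Bk" unfolding assms(2) memB botS_def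
    by (rule exI[of _ "{}"], rule exI[of _ "{}"]) (auto simp: FC_def simeq_def)
  show "topS \<in> Bk" unfolding assms(2) memB topS_def
    by (rule exI[of _ UNIV], rule exI[of _ UNIV]) (auto simp: FC_def simeq_def)
next
  fix x y assume "x \<in> Bk" "y \<in> Bk"
  then obtain A C A' C' where x: "x = (A, A \<inter> C, C)" "A \<in> FC" "C \<in> FC" "simeq A C"
    and y: "y = (A', A' \<inter> C', C')" "A' \<in> FC" "C' \<in> FC" "simeq A' C'"
    using assms(2) by (auto simp: memB)
  show "meetS x y \<in> Bk" unfolding x(1) y(1) meetB assms(2) memB
    using x y by (intro exI[of _ "A \<inter> A'"] exI[of _ "C \<inter> C'"]) (simp add: FC_int sim_int)
  show "joinS x y \<in> Bk" unfolding x(1) y(1) joinB assms(2) memB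
    using x y by (intro exI[of _ "A \<union> A'"] exI[of _ "C \<union> C'"]) (simp add: FC_un sim_un)
next
  fix x y z assume xb: "x \<in> Bk" and yb: "y \<in> Bk" and zb: "z \<in> Bk"
  obtain A C where x: "x = (A, A \<inter> C, C)" using xb unfolding assms(2) memB by blast
  obtain A' C' where y: "y = (A', A' \<inter> C', C')" using yb unfolding assms(2) memB by blast
  obtain A'' C'' where z: "z = (A'', A'' \<inter> C'', C'')" using zb unfolding assms(2) memB by blast
  show "meetS x (joinS y z) = joinS (meetS x y) (meetS x z)"
    unfolding x y z joinB meetB
    by (simp add: Int_Un_distrib Int_ac)
next
  fix x assume "x \<in> Bk"
  then obtain A C where x: "x = (A, A \<inter> C, C)" "A \<in> FC" "C \<in> FC" "simeq A C"
    using assms(2) by (auto simp: memB)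
  have "(- A, - A \<inter> - C, - C) \<in> Bk" unfolding assms(2) memB
    using x by (intro exI[of _ "- A"] exI[of _ "- C"]) (simp add: FC_neg sim_neg)
  moreover have "meetS x (- A, - A \<inter> - C, - C) = botS"
    unfolding x(1) meetB botS_def by auto
  moreover have "joinS x (- A, - A \<inter> - C, - C) = topS"
    unfolding x(1) joinB topS_def by auto
  ultimately show "\<exists>y\<in>Bk. meetS x y = botS \<and> joinS x y = topS" by blast
qed

end
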